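(* Let $A$ be a partially ordered set, $G$ a passable composite game over $A$, and $a\in A$. If every left option $G^L$ of $G$ satisfies $G^L\le [a]$, then $G\le [a]$.
   Context: Games over a poset $A$ are defined inductively: for each $a\in A$ there is an atomic game $[a]$, which has no options; and if $L$ and $R$ are non-empty sets of games, then $\{L\mid R\}$ is a composite game with left options $L$ and right options $R$. The relations $\le$ and $\lhd$ are defined by simultaneous recursion: $G\le H$ iff (1) every left option $G^L$ of $G$ satisfies $G^L\lhd H$, (2) every right option $H^R$ of $H$ satisfies $G\lhd H^R$, and (3) if $G$ or $H$ is atomic then $G\lhd H$; and $G\lhd H$ iff (1) some right option $G^R$ of $G$ satisfies $G^R\le H$, or (2) some left option $H^L$ of $H$ satisfies $G\le H^L$, or (3) $G=[a]$, $H=[b]$ are atomic and $a\le b$. A game $G$ is passable if $G\lhd G$ and recursively all its options are passable. *)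

theory Defs
  imports Main
begin

text \<open>A composite game has a non-empty
family of left options and a non-empty family of right options; the families are
indexed by an arbitrary index type 'i (non-empty since HOL types are non-empty),
so the option sets are exactly the images of these families.\<close>

datatype ('a, 'i) game = Atom 'a | Comp "'i \<Rightarrow> ('a, 'i) game" "'i \<Rightarrow> ('a, 'i) game"

fun lefts :: "('a, 'i) game \<Rightarrow> ('a, 'i) game set" where
  "lefts (Atom a) = {}"
| "lefts (Comp L R) = range L"

fun rights :: "('a, 'i) game \<Rightarrow> ('a, 'i) game set" where
  "rights (Atom a) = {}"
| "rights (Comp L R) = range R"

fun is_atom :: "('a, 'i) game \<Rightarrow> bool" where
  "is_atom (Atom a) = True"
| "is_atom (Comp L R) = False"

text \<open>The simultaneous recursive definition of \<le> and \<lhd>; since games are well-founded,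
the least fixed point given by the inductive definition coincides with the recursion.\<close>

inductive game_le :: "('a::order, 'i) game \<Rightarrow> ('a, 'i) game \<Rightarrow> bool"
  and game_lf :: "('a::order, 'i) game \<Rightarrow> ('a, 'i) game \<Rightarrow> bool" where
  le_intro: "\<lbrakk>\<forall>GL\<in>lefts G. game_lf GL H; \<forall>HR\<in>rights H. game_lf G HR;
             is_atom G \<or> is_atom H \<longrightarrow> game_lf G H\<rbrakk> \<Longrightarrow> game_le G H"
| lf_right: "\<lbrakk>GR \<in> rights G; game_le GR H\<rbrakk> \<Longrightarrow> game_lf G H"
| lf_left: "\<lbrakk>HL \<in> lefts H; game_le G HL\<rbrakk> \<Longrightarrow> game_lf G H"
| lf_atom: "a \<le> b \<Longrightarrow> game_lf (Atom a) (Atom b)"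

inductive passable :: "('a::order, 'i) game \<Rightarrow> bool" where
  "\<lbrakk>game_lf G G; \<forall>X\<in>lefts G. passable X; \<forall>X\<in>rights G. passable X\<rbrakk> \<Longrightarrow> passable G"

end

theory Submission
  imports Defs
begin

definition sub :: "(('a, 'i) game \<times> ('a, 'i) game) set" where
  "sub = {(x, y). x \<in> lefts y \<or> x \<in> rights y}"

lemma wf_sub: "wf sub"
proof (rule wfUNIVI)
  fix P :: "('a, 'i) game \<Rightarrow> bool" and x
  assume H: "\<forall>x. (\<forall>y. (y, x) \<in> sub \<longrightarrow> P y) \<longrightarrow> P x"
  show "P x"
  proof (induction x)
    case (Atom a)
    have "\<forall>y. (y, Atom a) \<in> sub \<longrightarrow> P y" by (simp add: sub_def)
    then show ?case using H by blast
  next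
    case (Comp L R)
    have "\<forall>y. (y, Comp L R) \<in> sub \<longrightarrow> P y" using Comp.IH by (auto simp add: sub_def)
    then show ?case using H by blast
  qed
qed

lemma subL: "x \<in> lefts y \<Longrightarrow> (x, y) \<in> sub" by (simp add: sub_def)
lemma subR: "x \<in> rights y \<Longrightarrow> (x, y) \<in> sub" by (simp add: sub_def)

lemma le_E: "game_le G H \<Longrightarrow> (\<forall>GL\<in>lefts G. game_lf GL H) \<and> (\<forall>HR\<in>rights H. game_lf G HR)
   \<and> (is_atom G \<or> is_atom H \<longrightarrow> game_lf G H)"
  by (erule game_le.cases) auto

lemma lf_E: "game_lf G H \<Longrightarrow> (\<exists>GR\<in>rights G. game_le GR H) \<or> (\<exists>HL\<in>lefts H. game_le G HL)
   \<or> (\<exists>a b. G = Atom a \<and> H = Atom b \<and> a \<le> b)"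
  by (erule game_lf.cases) auto

lemma atom_le: "(a::'a::order) \<le> b \<Longrightarrow> game_le (Atom a :: ('a,'i) game) (Atom b)"
  by (rule le_intro) (auto intro: lf_atom)

lemma trans_all:
  fixes X Y Z :: "('a::order, 'i) game"
  shows "(game_le X Y \<longrightarrow> game_le Y Z \<longrightarrow> game_le X Z) \<and>
         (game_lf X Y \<longrightarrow> game_le Y Z \<longrightarrow> game_lf X Z) \<and>
         (game_le X Y \<longrightarrow> game_lf Y Z \<longrightarrow> game_lf X Z)"
proof (induction "(X, Y, Z)" arbitrary: X Y Z rule: wf_induct_rule[OF wf_lex_prod[OF wf_sub wf_lex_prod[OF wf_sub wf_sub]]])
  case 1
  note IH = "1"
  have IX: "\<And>X' Y' Z'. (X', X) \<in> sub \<Longrightarrow>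
     (game_le X' Y' \<longrightarrow> game_le Y' Z' \<longrightarrow> game_le X' Z') \<and>
         (game_lf X' Y' \<longrightarrow> game_le Y' Z' \<longrightarrow> game_lf X' Z') \<and>
         (game_le X' Y' \<longrightarrow> game_lf Y' Z' \<longrightarrow> game_lf X' Z')"
    by (rule IH) simp
  have IY: "\<And>Y' Z'. (Y', Y) \<in> sub \<Longrightarrow>
     (game_le X Y' \<longrightarrow> game_le Y' Z' \<longrightarrow> game_le X Z') \<and>
         (game_lf X Y' \<longrightarrow> game_le Y' Z' \<longrightarrow> game_lf X Z') \<and>
         (game_le X Y' \<longrightarrow> game_lf Y' Z' \<longrightarrow> game_lf X Z')"
    by (rule IH) simp
  have IZ: "\<And>Z'. (Z', Z) \<in> sub \<Longrightarrow>
     (game_le X Y \<longrightarrow> game_le Y Z' \<longrightarrow> game_le X Z') \<and>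
         (game_lf X Y \<longrightarrow> game_le Y Z' \<longrightarrow> game_lf X Z') \<and>
         (game_le X Y \<longrightarrow> game_lf Y Z' \<longrightarrow> game_lf X Z')"
    by (rule IH) simp
  have T2: "game_lf X Z" if lf: "game_lf X Y" and le: "game_le Y Z"
  proof -
    from lf_E[OF lf] show ?thesis
    proof (elim disjE bexE exE conjE)
      fix GR assume GR: "GR \<in> rights X" "game_le GR Y"
      have "game_le GR Z" using IX[OF subR[OF GR(1)], of Y Z] GR(2) le by simp
      then show ?thesis using GR(1) by (rule lf_right[rotated])
    next
      fix HL assume HL: "HL \<in> lefts Y" "game_le X HL"
      have "game_lf HL Z" using le_E[OF le] HL(1) by simp
      then show ?thesis using IY[OF subL[OF HL(1)], of Z] HL(2) by simp
    next
      fix d b assume eq: "X = Atom d" "Y = Atom b" and db: "d \<le> b"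
      have "game_lf (Atom b) Z" using le_E[OF le] eq by simp
      from lf_E[OF this] show ?thesis
      proof (elim disjE bexE exE conjE)
        fix GR assume "GR \<in> rights (Atom b :: ('a,'i) game)" then show ?thesis by simp
      next
        fix HL assume HL: "HL \<in> lefts Z" "game_le (Atom b) HL"
        have "game_le X Y" using eq db atom_le by blast
        then have "game_le X HL" using IZ[OF subL[OF HL(1)]] HL eq by simp
        then show ?thesis using HL(1) by (rule lf_left[rotated])
      next
        fix b' c assume "(Atom b :: ('a,'i) game) = Atom b'" "Z = Atom c" "b' \<le> c"
        then show ?thesis using eq db by (auto intro: lf_atom order_trans)
      qed
    qed
  qed
  have T3: "game_lf X Z" if le: "game_le X Y" and lf: "game_lf Y Z"
  proof -
    from lf_E[OF lf] show ?thesis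
    proof (elim disjE bexE exE conjE)
      fix GR assume GR: "GR \<in> rights Y" "game_le GR Z"
      have "game_lf X GR" using le_E[OF le] GR(1) by simp
      then show ?thesis using IY[OF subR[OF GR(1)], of Z] GR(2) by simp
    next
      fix HL assume HL: "HL \<in> lefts Z" "game_le Y HL"
      have "game_le X HL" using IZ[OF subL[OF HL(1)]] HL(2) le by simp
      then show ?thesis using HL(1) by (rule lf_left[rotated])
    next
      fix b c assume eq: "Y = Atom b" "Z = Atom c" and bc: "b \<le> c"
      have "game_lf X (Atom b)" using le_E[OF le] eq by simp
      from lf_E[OF this] show ?thesis
      proof (elim disjE bexE exE conjE)
        fix XR assume XR: "XR \<in> rights X" "game_le XR (Atom b)"
        have "game_le Y Z" using eq bc atom_le by blast
        then have "game_le XR Z" using IX[OF subR[OF XR(1)], of Y Z] XR eq by simp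
        then show ?thesis using XR(1) by (rule lf_right[rotated])
      next
        fix HL assume "HL \<in> lefts (Atom b :: ('a,'i) game)" then show ?thesis by simp
      next
        fix d b' assume "X = Atom d" "(Atom b :: ('a,'i) game) = Atom b'" "d \<le> b'"
        then show ?thesis using eq bc by (auto intro: lf_atom order_trans)
      qed
    qed
  qed
  have T1: "game_le X Z" if le1: "game_le X Y" and le2: "game_le Y Z"
  proof (rule le_intro)
    show "\<forall>GL\<in>lefts X. game_lf GL Z"
    proof
      fix XL assume XL: "XL \<in> lefts X"
      have "game_lf XL Y" using le_E[OF le1] XL by blast
      then show "game_lf XL Z" using IX[OF subL[OF XL], of Y Z] le2 by simp
    qed
    show "\<forall>HR\<in>rights Z. game_lf X HR"
    proof
      fix ZR assume ZR: "ZR \<in> rights Z"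
      have "game_lf Y ZR" using le_E[OF le2] ZR by blast
      then show "game_lf X ZR" using IZ[OF subR[OF ZR]] le1 by simp
    qed
    show "is_atom X \<or> is_atom Z \<longrightarrow> game_lf X Z"
    proof
      assume "is_atom X \<or> is_atom Z"
      then show "game_lf X Z"
      proof
        assume "is_atom X"
        then have "game_lf X Y" using le_E[OF le1] by simp
        then show ?thesis using T2 le2 by simp
      next
        assume "is_atom Z"
        then have "game_lf Y Z" using le_E[OF le2] by simp
        then show ?thesis using T3 le1 by simp
      qed
    qed
  qed
  show ?case using T1 T2 T3 by blast
qed

lemma le_trans': "game_le X Y \<Longrightarrow> game_le Y Z \<Longrightarrow> game_le X Z"
  using trans_all by blast
lemma le_lf_trans: "game_le X Y \<Longrightarrow> game_lf Y Z \<Longrightarrow> game_lf X Z"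
  using trans_all by blast

lemma le_refl': "game_le (G::('a::order,'i) game) G"
proof (induction G rule: wf_induct_rule[OF wf_sub])
  case (1 G)
  show ?case
  proof (rule le_intro)
    show "\<forall>GL\<in>lefts G. game_lf GL G" using 1 subL by (blast intro: lf_left)
    show "\<forall>HR\<in>rights G. game_lf G HR" using 1 subR by (blast intro: lf_right)
    show "is_atom G \<or> is_atom G \<longrightarrow> game_lf G G"
      by (cases G) (auto intro: lf_atom)
  qed
qed

theorem proposition6p13:
  fixes G :: "('a::order, 'i) game" and a :: 'a
  assumes "passable G"
    and "\<not> is_atom G"
    and "\<forall>GL\<in>lefts G. game_le GL (Atom a)"
  shows "game_le G (Atom a)"
proof -
  have GG: "game_lf G G" using assms(1) by (cases rule: passable.cases) auto
  have lfA: "game_lf X (Atom a)" if "game_le X (Atom a)" for X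
    using le_E[OF that] by simp
  have claim: "game_le X G \<longrightarrow> game_le X (Atom a)" for X
  proof (induction X rule: wf_induct_rule[OF wf_trancl[OF wf_sub]])
    case (1 X)
    show ?case
    proof
      assume XG: "game_le X G"
      show "game_le X (Atom a)"
      proof (rule le_intro)
        show "\<forall>GL\<in>lefts X. game_lf GL (Atom a)"
        proof
          fix XL assume XL: "XL \<in> lefts X"
          have "game_lf XL G" using le_E[OF XG] XL by blast
          from lf_E[OF this] show "game_lf XL (Atom a)"
          proof (elim disjE bexE exE conjE)
            fix R assume R: "R \<in> rights XL" "game_le R G"
            have "(R, X) \<in> sub\<^sup>+" using subR[OF R(1)] subL[OF XL] by auto
            then have "game_le R (Atom a)" using 1 R by blast
            then show ?thesis using R by (blast intro: lf_right)
          next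
            fix GL assume "GL \<in> lefts G" "game_le XL GL"
            then show ?thesis using assms(3) lfA le_trans' by blast
          next
            fix d b assume "G = Atom b" then show ?thesis using assms(2) by simp
          qed
        qed
        show "\<forall>HR\<in>rights (Atom a). game_lf X HR" by simp
        have "game_lf X G" using le_lf_trans[OF XG GG] .
        from lf_E[OF this] show "is_atom X \<or> is_atom (Atom a) \<longrightarrow> game_lf X (Atom a)"
        proof (elim disjE bexE exE conjE)
          fix R assume R: "R \<in> rights X" "game_le R G"
          have "(R, X) \<in> sub\<^sup>+" using subR[OF R(1)] by auto
          then have "game_le R (Atom a)" using 1 R by blast
          then show ?thesis using R by (blast intro: lf_right)
        next
          fix GL assume "GL \<in> lefts G" "game_le X GL"
          then show ?thesis using assms(3) lfA le_trans' by blast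
        next
          fix d b assume "G = Atom b" then show ?thesis using assms(2) by simp
        qed
      qed
    qed
  qed
  show ?thesis using claim le_refl' by blast
qed

end
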